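(* Let $G=(V,E,s_0,s_1)$ be a switch graph and $o,d\in V$ with $o\neq d$. If $\textsc{Run}(G,o,d)$ does not terminate, then it reaches a dead end (i.e., at some point the current vertex $v$ of the run is a dead end).
   Context: A switch graph is a 4-tuple $G=(V,E,s_0,s_1)$ where $V$ is a finite vertex set, $s_0,s_1:V\to V$, and $E=\{(v,s_0(v)):v\in V\}\cup\{(v,s_1(v)):v\in V\}$ (loops allowed; possibly $s_0(v)=s_1(v)$). The procedure $\textsc{Run}(G,o,d)$: maintain arrays $\mathtt{s\_curr},\mathtt{s\_next}$ indexed by $V$, initially $\mathtt{s\_curr}[v]=s_0(v)$, $\mathtt{s\_next}[v]=s_1(v)$; set $v:=o$; while $v\neq d$: $w:=\mathtt{s\_curr}[v]$, swap $\mathtt{s\_curr}[v],\mathtt{s\_next}[v]$, $v:=w$ (traversing edge $(v,w)$). A dead end is a vertex from which there is no directed path to $d$ in the directed graph $(V,E)$. *)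

theory Defs
  imports Main
begin

definition switch_graph :: "'a set \<Rightarrow> ('a \<Rightarrow> 'a) \<Rightarrow> ('a \<Rightarrow> 'a) \<Rightarrow> bool" where
  "switch_graph V s0 s1 \<longleftrightarrow> finite V \<and> (\<forall>v\<in>V. s0 v \<in> V \<and> s1 v \<in> V)"

definition sg_edges :: "'a set \<Rightarrow> ('a \<Rightarrow> 'a) \<Rightarrow> ('a \<Rightarrow> 'a) \<Rightarrow> ('a \<times> 'a) set" where
  "sg_edges V s0 s1 = {(v, s0 v) | v. v \<in> V} \<union> {(v, s1 v) | v. v \<in> V}"

definition dead_end :: "'a set \<Rightarrow> ('a \<Rightarrow> 'a) \<Rightarrow> ('a \<Rightarrow> 'a) \<Rightarrow> 'a \<Rightarrow> 'a \<Rightarrow> bool" where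
  "dead_end V s0 s1 d v \<longleftrightarrow> (v, d) \<notin> (sg_edges V s0 s1)\<^sup>*"

text \<open>A state of Run: (current vertex, s_curr, s_next). One loop iteration.\<close>
definition run_step :: "'a \<times> ('a \<Rightarrow> 'a) \<times> ('a \<Rightarrow> 'a) \<Rightarrow> 'a \<times> ('a \<Rightarrow> 'a) \<times> ('a \<Rightarrow> 'a)" where
  "run_step st = (case st of (v, cur, nxt) \<Rightarrow> (cur v, cur(v := nxt v), nxt(v := cur v)))"

text \<open>State after n loop iterations, ignoring the termination test.\<close>
definition run_state :: "('a \<Rightarrow> 'a) \<Rightarrow> ('a \<Rightarrow> 'a) \<Rightarrow> 'a \<Rightarrow> nat \<Rightarrow> 'a \<times> ('a \<Rightarrow> 'a) \<times> ('a \<Rightarrow> 'a)" where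
  "run_state s0 s1 orig n = (run_step ^^ n) (orig, s0, s1)"

definition run_vertex :: "('a \<Rightarrow> 'a) \<Rightarrow> ('a \<Rightarrow> 'a) \<Rightarrow> 'a \<Rightarrow> nat \<Rightarrow> 'a" where
  "run_vertex s0 s1 orig n = fst (run_state s0 s1 orig n)"

definition run_terminates :: "('a \<Rightarrow> 'a) \<Rightarrow> ('a \<Rightarrow> 'a) \<Rightarrow> 'a \<Rightarrow> 'a \<Rightarrow> bool" where
  "run_terminates s0 s1 orig d \<longleftrightarrow> (\<exists>n. run_vertex s0 s1 orig n = d)"

end

theory Submission
  imports Defs
begin

lemma rs_Suc: "run_state s0 s1 orig (Suc n) = run_step (run_state s0 s1 orig n)"
  by (simp add: run_state_def)

lemma rs_0: "run_state s0 s1 orig 0 = (orig, s0, s1)"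
  by (simp add: run_state_def)

lemma inv_sw:
  "\<forall>v. (fst (snd (run_state s0 s1 orig n)) v = s0 v \<and> snd (snd (run_state s0 s1 orig n)) v = s1 v)
     \<or> (fst (snd (run_state s0 s1 orig n)) v = s1 v \<and> snd (snd (run_state s0 s1 orig n)) v = s0 v)"
proof (induction n)
  case 0 then show ?case by (simp add: rs_0)
next
  case (Suc n)
  obtain x c t where e: "run_state s0 s1 orig n = (x, c, t)" by (cases "run_state s0 s1 orig n") auto
  show ?case using Suc e by (auto simp: rs_Suc run_step_def)
qed

lemma rv_Suc: "run_vertex s0 s1 orig (Suc n) = fst (snd (run_state s0 s1 orig n)) (run_vertex s0 s1 orig n)"
  by (cases "run_state s0 s1 orig n") (auto simp: run_vertex_def rs_Suc run_step_def)

lemma unchanged: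
  assumes "\<forall>k. a \<le> k \<and> k < a + m \<longrightarrow> run_vertex s0 s1 orig k \<noteq> v"
  shows "fst (snd (run_state s0 s1 orig (a + m))) v = fst (snd (run_state s0 s1 orig a)) v"
  using assms
proof (induction m)
  case 0 then show ?case by simp
next
  case (Suc m)
  have "run_vertex s0 s1 orig (a + m) \<noteq> v" using Suc.prems by auto
  moreover have "fst (snd (run_state s0 s1 orig (a + m))) v = fst (snd (run_state s0 s1 orig a)) v"
    using Suc by auto
  ultimately show ?case
    by (cases "run_state s0 s1 orig (a + m)") (auto simp: run_vertex_def rs_Suc run_step_def)
qed

lemma vert_V:
  assumes "switch_graph V s0 s1" "orig \<in> V"
  shows "run_vertex s0 s1 orig n \<in> V"
proof (induction n)
  case 0 then show ?case using assms by (simp add: run_vertex_def rs_0)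
next
  case (Suc n)
  then show ?case using inv_sw[of s0 s1 orig n] assms(1)
    unfolding rv_Suc switch_graph_def by metis
qed

lemma inf_succ:
  assumes inf: "\<forall>N. \<exists>n\<ge>N. run_vertex s0 s1 orig n = v"
  shows "(\<forall>N. \<exists>n\<ge>N. run_vertex s0 s1 orig n = s0 v) \<and> (\<forall>N. \<exists>n\<ge>N. run_vertex s0 s1 orig n = s1 v)"
proof -
  let ?rv = "run_vertex s0 s1 orig"
  let ?c = "\<lambda>n. fst (snd (run_state s0 s1 orig n))"
  let ?t = "\<lambda>n. snd (snd (run_state s0 s1 orig n))"
  have key: "\<exists>n\<ge>N. ?rv n = ?c n1 v" "\<exists>n\<ge>N. ?rv n = ?t n1 v" if "n1 \<ge> N" "?rv n1 = v" for N n1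
  proof -
    show "\<exists>n\<ge>N. ?rv n = ?c n1 v"
      by (rule exI[of _ "Suc n1"]) (use that in \<open>simp add: rv_Suc\<close>)
    obtain m where m: "m > n1" "?rv m = v" using inf by (metis Suc_le_eq)
    define n2 where "n2 = (LEAST m. m > n1 \<and> ?rv m = v)"
    have n2: "n2 > n1" "?rv n2 = v" using LeastI[of "\<lambda>m. m > n1 \<and> ?rv m = v" m] m
      unfolding n2_def by auto
    have nov: "\<forall>k. Suc n1 \<le> k \<and> k < Suc n1 + (n2 - Suc n1) \<longrightarrow> ?rv k \<noteq> v"
    proof (intro allI impI)
      fix k assume "Suc n1 \<le> k \<and> k < Suc n1 + (n2 - Suc n1)"
      then have "k > n1" "k < n2" by auto
      then show "?rv k \<noteq> v" using not_less_Least[of k "\<lambda>m. m > n1 \<and> ?rv m = v"]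
        unfolding n2_def[symmetric] by auto
    qed
    have "?c n2 v = ?c (Suc n1) v"
      using unchanged[OF nov] n2 by simp
    also have "\<dots> = ?t n1 v"
      using that by (cases "run_state s0 s1 orig n1") (auto simp: run_vertex_def rs_Suc run_step_def)
    finally have "?rv (Suc n2) = ?t n1 v" using n2 by (simp add: rv_Suc)
    then show "\<exists>n\<ge>N. ?rv n = ?t n1 v" using n2 that by (intro exI[of _ "Suc n2"]) auto
  qed
  show ?thesis
  proof (intro conjI allI)
    fix N
    obtain n1 where "n1 \<ge> N" "?rv n1 = v" using inf by blast
    then show "\<exists>n\<ge>N. ?rv n = s0 v" "\<exists>n\<ge>N. ?rv n = s1 v"
      using key[of N n1] inv_sw[of s0 s1 orig n1] by metis+
  qed
qed

theorem lemma3: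
  fixes V :: "'a set" and s0 s1 :: "'a \<Rightarrow> 'a" and orig d :: 'a
  assumes "switch_graph V s0 s1" and "orig \<in> V" and "d \<in> V" and "orig \<noteq> d"
    and "\<not> run_terminates s0 s1 orig d"
  shows "\<exists>n. dead_end V s0 s1 d (run_vertex s0 s1 orig n)"
proof (rule ccontr)
  assume nd: "\<not> ?thesis"
  let ?rv = "run_vertex s0 s1 orig"
  have fin: "finite (?rv ` UNIV)"
    using vert_V[OF assms(1,2)] assms(1) unfolding switch_graph_def
    by (meson finite_subset image_subsetI)
  obtain n0 where "infinite {n. ?rv n = ?rv n0}"
    using pigeonhole_infinite[OF infinite_UNIV_nat fin] by auto
  have inf0: "\<forall>N. \<exists>n\<ge>N. ?rv n = ?rv n0"
  proof
    fix N
    show "\<exists>n\<ge>N. ?rv n = ?rv n0"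
    proof (rule ccontr)
      assume "\<not> (\<exists>n\<ge>N. ?rv n = ?rv n0)"
      then have "{n. ?rv n = ?rv n0} \<subseteq> {..<N}" by (auto simp: not_le[symmetric])
      then show False using \<open>infinite {n. ?rv n = ?rv n0}\<close> finite_subset by blast
    qed
  qed
  have reach: "(?rv n0, d) \<in> (sg_edges V s0 s1)\<^sup>*" using nd unfolding dead_end_def by blast
  have "\<forall>N. \<exists>n\<ge>N. ?rv n = y" if "(?rv n0, y) \<in> (sg_edges V s0 s1)\<^sup>*" for y
    using that
  proof (induction rule: rtrancl_induct)
    case base then show ?case using inf0 .
  next
    case (step y z)
    then show ?case using inf_succ[of s0 s1 orig y] unfolding sg_edges_def by auto
  qed
  then have "\<exists>n. ?rv n = d" using reach by blast
  then show False using assms(5) unfolding run_terminates_def by blast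
qed

end
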